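(* Let $K$ be a field and $T$ a ring extension of $K$. If $V$ is a maximal subring of $T$ which is integrally closed in $T$ and $K\not\subseteq V$, then $V\cap K$ is a maximal subring of $K$; in particular, $V\cap K$ is a one-dimensional valuation domain.
   Context: All rings are commutative with $1\neq0$ and subrings are unital. A maximal subring is a proper subring maximal with respect to inclusion among proper subrings. *)

theory Defs
  imports "HOL-Algebra.Algebra"
begin

definition maximal_subring :: "'a set \<Rightarrow> ('a, 'b) ring_scheme \<Rightarrow> bool" where
  "maximal_subring S R \<longleftrightarrow> subring S R \<and> S \<noteq> carrier R \<and>
     (\<forall>S'. subring S' R \<and> S \<subseteq> S' \<and> S' \<noteq> carrier R \<longrightarrow> S' = S)"

text \<open>x is integral over the subset S of R: root of a monic polynomial with coefficients in S
  (polynomials are coefficient lists, highest degree first).\<close>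
definition integral_over :: "('a, 'b) ring_scheme \<Rightarrow> 'a set \<Rightarrow> 'a \<Rightarrow> bool" where
  "integral_over R S x \<longleftrightarrow> x \<in> carrier R \<and>
     (\<exists>p. set p \<subseteq> S \<and> p \<noteq> [] \<and> hd p = \<one>\<^bsub>R\<^esub> \<and> ring.eval R p x = \<zero>\<^bsub>R\<^esub>)"

definition integrally_closed_in :: "'a set \<Rightarrow> ('a, 'b) ring_scheme \<Rightarrow> bool" where
  "integrally_closed_in S R \<longleftrightarrow> (\<forall>x \<in> carrier R. integral_over R S x \<longrightarrow> x \<in> S)"

definition valuation_domain :: "('a, 'b) ring_scheme \<Rightarrow> bool" where
  "valuation_domain R \<longleftrightarrow> domain R \<and>
     (\<forall>a \<in> carrier R. \<forall>b \<in> carrier R.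
        (\<exists>c \<in> carrier R. b = a \<otimes>\<^bsub>R\<^esub> c) \<or> (\<exists>c \<in> carrier R. a = b \<otimes>\<^bsub>R\<^esub> c))"

definition krull_dim_one :: "('a, 'b) ring_scheme \<Rightarrow> bool" where
  "krull_dim_one R \<longleftrightarrow>
     (\<exists>P Q. primeideal P R \<and> primeideal Q R \<and> P \<subset> Q) \<and>
     \<not> (\<exists>P Q U. primeideal P R \<and> primeideal Q R \<and> primeideal U R \<and> P \<subset> Q \<and> Q \<subset> U)"

end

theory Submission
  imports Defs
begin


locale L = cring T for T (structure) +
  fixes K V :: "'a set"
  assumes K: "subfield K T" and Vm: "maximal_subring V T"
    and Vic: "integrally_closed_in V T" and KV: "\<not> K \<subseteq> V"
begin

lemma V_sub: "subring V T" using Vm unfolding maximal_subring_def by auto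
lemma V_ne: "V \<noteq> carrier T" using Vm unfolding maximal_subring_def by auto
lemma V_car: "V \<subseteq> carrier T" using subringE(1)[OF V_sub] .
lemma K_sub: "subring K T" using subfieldE(1)[OF K] .
lemma K_car: "K \<subseteq> carrier T" using subringE(1)[OF K_sub] .

lemma V_max:
  assumes "subring S T" "V \<subseteq> S" "x \<in> S" "x \<notin> V"
  shows "S = carrier T"
  using Vm assms unfolding maximal_subring_def by blast

lemma ext_all:
  assumes x: "x \<in> carrier T" "x \<notin> V"
  shows "(\<lambda>p. eval p x) ` {p. set p \<subseteq> V} = carrier T"
proof (rule V_max)
  let ?E = "(\<lambda>p. eval p x) ` {p. set p \<subseteq> V}"
  have pc: "set p \<subseteq> V \<Longrightarrow> set p \<subseteq> carrier T" for p using V_car by auto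
  have polyV: "polynomial V q \<Longrightarrow> set q \<subseteq> V" for q using polynomial_incl by blast
  have memE: "set p \<subseteq> V \<Longrightarrow> eval p x = h \<Longrightarrow> h \<in> ?E" for p h by blast
  show "subring ?E T"
  proof (rule subringI)
    show "?E \<subseteq> carrier T" using eval_in_carrier[OF pc x(1)] by auto
    have "eval [\<one>] x = \<one>" by simp
    moreover have "set [\<one>] \<subseteq> V" using subringE(3)[OF V_sub] by simp
    ultimately show "\<one> \<in> ?E" using memE by blast
  next
    fix h assume "h \<in> ?E"
    then obtain p where p: "set p \<subseteq> V" "h = eval p x" by auto
    have "set [\<ominus> \<one>] \<subseteq> V" using subringE(3,5)[OF V_sub] by simp
    then have s: "set (poly_mult [\<ominus> \<one>] p) \<subseteq> V"
      using polyV[OF poly_mult_is_polynomial[OF V_sub _ p(1)]] by blast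
    have "eval (poly_mult [\<ominus> \<one>] p) x = eval [\<ominus> \<one>] x \<otimes> eval p x"
      by (rule eval_poly_mult) (use pc[OF p(1)] x in auto)
    also have "\<dots> = \<ominus> h" using p eval_in_carrier[OF pc[OF p(1)] x(1)] by (simp add: l_minus)
    finally show "\<ominus> h \<in> ?E" using s memE by blast
  next
    fix h1 h2 assume "h1 \<in> ?E" "h2 \<in> ?E"
    then obtain p q where p: "set p \<subseteq> V" "h1 = eval p x" and q: "set q \<subseteq> V" "h2 = eval q x" by auto
    have s: "set (poly_mult p q) \<subseteq> V"
      using polyV[OF poly_mult_is_polynomial[OF V_sub p(1) q(1)]] by blast
    have "eval (poly_mult p q) x = h1 \<otimes> h2"
      using eval_poly_mult[OF pc[OF p(1)] pc[OF q(1)] x(1)] p q by simp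
    then show "h1 \<otimes> h2 \<in> ?E" using s memE by blast
    have s2: "set (poly_add p q) \<subseteq> V"
      using polyV[OF poly_add_is_polynomial[OF V_sub p(1) q(1)]] by blast
    have "eval (poly_add p q) x = h1 \<oplus> h2"
      using eval_poly_add[OF pc[OF p(1)] pc[OF q(1)] x(1)] p q by simp
    then show "h1 \<oplus> h2 \<in> ?E" using s2 memE by blast
  qed
  show "V \<subseteq> ?E"
  proof
    fix v assume v: "v \<in> V"
    then have "eval [v] x = v" using V_car by auto
    then show "v \<in> ?E" using v memE[of "[v]"] by auto
  qed
  have "eval [\<one>, \<zero>] x = x" using x by simp
  moreover have "set [\<one>, \<zero>] \<subseteq> V" using subringE(2,3)[OF V_sub] by simp
  ultimately show "x \<in> ?E" using memE by blast
  show "x \<notin> V" by fact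
qed


lemma inv_facts:
  assumes "x \<in> K" "x \<noteq> \<zero>"
  shows "inv x \<in> K" "inv x \<noteq> \<zero>" "x \<otimes> inv x = \<one>" "inv x \<otimes> x = \<one>"
    "inv x \<in> carrier T" "x \<in> carrier T"
  using subfield_m_inv[OF K, of x] assms K_car by auto

lemma eval_neg:
  assumes "set p \<subseteq> carrier T" "u \<in> carrier T"
  shows "eval (map (\<lambda>a. \<ominus> a) p) u = \<ominus> eval p u"
  using assms(1)
proof (induct p)
  case Nil then show ?case by simp
next
  case (Cons c p)
  have e: "eval p u \<in> carrier T" using eval_in_carrier Cons(2) assms(2) by auto
  have "eval (map (\<lambda>a. \<ominus> a) (c # p)) u = (\<ominus> c) \<otimes> u [^] length p \<oplus> \<ominus> eval p u"
    using Cons by simp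
  also have "\<dots> = \<ominus> (c \<otimes> u [^] length p \<oplus> eval p u)"
    using Cons(2) assms(2) e by (simp add: l_minus minus_add)
  finally show ?case by simp
qed

lemma rev_eval:
  assumes "set p \<subseteq> carrier T" "x \<in> carrier T" "u \<in> carrier T" "x \<otimes> u = \<one>"
  shows "eval p x \<otimes> u [^] length p = eval (rev p) u \<otimes> u"
  using assms(1)
proof (induct p)
  case Nil then show ?case using assms by simp
next
  case (Cons c p)
  let ?m = "length p"
  have c: "c \<in> carrier T" and pc: "set p \<subseteq> carrier T" using Cons(2) by auto
  have e: "eval p x \<in> carrier T" "eval (rev p) u \<in> carrier T"
    using eval_in_carrier pc assms(2,3) by auto
  have xm: "x [^] ?m \<otimes> u [^] ?m = \<one>"
    using pow_mult_distrib[OF m_comm assms(2,3), of ?m, symmetric] assms(2,3,4) m_comm by simp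
  have IH: "eval p x \<otimes> u [^] ?m = eval (rev p) u \<otimes> u" using Cons(1) pc by simp
  have "eval (c # p) x \<otimes> u [^] length (c # p) = (c \<otimes> x [^] ?m \<oplus> eval p x) \<otimes> (u [^] ?m \<otimes> u)"
    by simp
  also have "\<dots> = c \<otimes> (x [^] ?m \<otimes> u [^] ?m) \<otimes> u \<oplus> (eval p x \<otimes> u [^] ?m) \<otimes> u"
  proof -
    have g: "\<And>A B. A \<in> carrier T \<Longrightarrow> B \<in> carrier T \<Longrightarrow>
      (c \<otimes> A \<oplus> eval p x) \<otimes> (B \<otimes> u) = c \<otimes> (A \<otimes> B) \<otimes> u \<oplus> (eval p x \<otimes> B) \<otimes> u"
      using c e assms(2,3) by algebra
    show ?thesis by (rule g) (use assms(2,3) in simp_all)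
  qed
  also have "\<dots> = c \<otimes> u \<oplus> eval (rev p) u \<otimes> u \<otimes> u" using xm IH c assms(3) by simp
  also have "\<dots> = (eval (rev p) u \<otimes> u \<oplus> c) \<otimes> u" using c e assms(3) by algebra
  also have "\<dots> = eval (rev (c # p)) u \<otimes> u"
    using eval_append_aux[of "rev p" c u] pc c assms(3) by simp
  finally show ?case .
qed

lemma val:
  assumes x: "x \<in> K" "x \<noteq> \<zero>" "x \<notin> V"
  shows "inv x \<in> V"
proof -
  note I = inv_facts[OF x(1,2)]
  let ?u = "inv x"
  obtain p where p: "set p \<subseteq> V" "?u = eval p x"
    using ext_all[OF I(6) x(3)] I(5) by (metis (no_types, lifting) image_iff mem_Collect_eq)
  have pc: "set p \<subseteq> carrier T" using p V_car by auto
  have pr: "set (rev p) \<subseteq> carrier T" using pc by simp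
  let ?n = "length p"
  have e: "eval (rev p) ?u \<in> carrier T" using eval_in_carrier[OF pr I(5)] .
  have "?u \<otimes> ?u [^] ?n = eval (rev p) ?u \<otimes> ?u"
    using rev_eval[OF pc I(6) I(5) I(3)] p(2) by simp
  then have "?u [^] ?n \<otimes> ?u \<otimes> x = eval (rev p) ?u \<otimes> ?u \<otimes> x"
    using m_comm[OF I(5), of "?u [^] ?n"] I(5) by simp
  then have un: "?u [^] ?n = eval (rev p) ?u"
    using I e by (simp add: m_assoc)
  let ?q = "\<one> # map (\<lambda>a. \<ominus> a) (rev p)"
  have "eval ?q ?u = ?u [^] ?n \<oplus> \<ominus> eval (rev p) ?u"
    using eval_neg[OF pr I(5)] I(5) by simp
  also have "\<dots> = \<zero>" using un e by (simp add: r_neg)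
  finally have ev: "eval ?q ?u = \<zero>" .
  have "set ?q \<subseteq> V" using p subringE(3,5)[OF V_sub] by auto
  then have "integral_over T V ?u"
    unfolding integral_over_def using ev I(5) by (intro conjI exI[of _ ?q]) auto
  then show ?thesis using Vic I(5) unfolding integrally_closed_in_def by blast
qed

lemma pow:
  assumes x: "x \<in> K" "x \<noteq> \<zero>" "x \<notin> V" and y: "y \<in> carrier T"
  shows "\<exists>n. y \<otimes> inv x [^] (n::nat) \<in> V"
proof -
  note I = inv_facts[OF x(1,2)]
  let ?u = "inv x"
  have uV: "?u \<in> V" using val[OF x] .
  let ?S = "{y \<in> carrier T. \<exists>n::nat. y \<otimes> ?u [^] n \<in> V}"
  have uc: "?u [^] (n::nat) \<in> carrier T" for n using I(5) by simp
  have uVn: "?u [^] (n::nat) \<in> V" for n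
    by (induct n) (auto intro: subringE(3,6)[OF V_sub] uV)
  have "subring ?S T"
  proof (rule subringI)
    show "?S \<subseteq> carrier T" by auto
    show "\<one> \<in> ?S" using subringE(3)[OF V_sub] by (auto intro!: exI[of _ 0])
  next
    fix h assume "h \<in> ?S"
    then obtain n :: nat where h: "h \<in> carrier T" "h \<otimes> ?u [^] n \<in> V" by blast
    have "\<ominus> h \<otimes> ?u [^] n = \<ominus> (h \<otimes> ?u [^] n)" using h uc by (simp add: l_minus)
    then have "\<ominus> h \<otimes> ?u [^] n \<in> V" using h subringE(5)[OF V_sub] by simp
    then show "\<ominus> h \<in> ?S" using h by blast
  next
    fix h1 h2 assume "h1 \<in> ?S" "h2 \<in> ?S"
    then obtain n m :: nat where h1: "h1 \<in> carrier T" "h1 \<otimes> ?u [^] n \<in> V"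
      and h2: "h2 \<in> carrier T" "h2 \<otimes> ?u [^] m \<in> V" by blast
    have "h1 \<otimes> h2 \<otimes> ?u [^] (n + m) = (h1 \<otimes> ?u [^] n) \<otimes> (h2 \<otimes> ?u [^] m)"
      using h1 h2 uc I(5) by (simp add: nat_pow_mult[symmetric] m_ac)
    then show "h1 \<otimes> h2 \<in> ?S" using h1 h2 subringE(6)[OF V_sub] by (auto intro!: exI[of _ "n+m"])
    have "(h1 \<oplus> h2) \<otimes> ?u [^] (n + m) = (h1 \<otimes> ?u [^] n) \<otimes> ?u [^] m \<oplus> (h2 \<otimes> ?u [^] m) \<otimes> ?u [^] n"
      using h1 h2 uc I(5) by (simp add: nat_pow_mult[symmetric] m_ac l_distr)
    moreover have "(h1 \<otimes> ?u [^] n) \<otimes> ?u [^] m \<oplus> (h2 \<otimes> ?u [^] m) \<otimes> ?u [^] n \<in> V"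
      using h1 h2 uVn subringE(6,7)[OF V_sub] by auto
    ultimately show "h1 \<oplus> h2 \<in> ?S" using h1 h2 by (auto intro!: exI[of _ "n+m"])
  qed
  moreover have "V \<subseteq> ?S" using V_car by (auto intro!: exI[of _ 0])
  moreover have "x \<in> ?S" using I subringE(3)[OF V_sub] by (auto intro!: exI[of _ 1])
  ultimately have "?S = carrier T" using V_max x(3) by blast
  then show ?thesis using y by auto
qed

end


context L
begin

abbreviation "W \<equiv> V \<inter> K"

lemma W_sub: "subring W T" using subring_inter[OF V_sub K_sub] .
lemma W_car: "W \<subseteq> carrier T" using V_car by auto

lemma pow_closed: "subring S T \<Longrightarrow> a \<in> S \<Longrightarrow> a [^] (n::nat) \<in> S"
  by (induct n) (auto intro: subringE(3,6))

lemma ringK: "ring (T\<lparr>carrier := K\<rparr>)" using subring_is_ring[OF K_sub] .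

lemma sub_trans:
  assumes "subring S (T\<lparr>carrier := K\<rparr>)" shows "subring S T" "S \<subseteq> K"
proof -
  show SK: "S \<subseteq> K" using subringE(1)[OF assms] by simp
  have "ring ((T\<lparr>carrier := K\<rparr>)\<lparr>carrier := S\<rparr>)" using ring.subring_is_ring[OF ringK assms] .
  then have "ring (T\<lparr>carrier := S\<rparr>)" by simp
  then show "subring S T" using subring_iff SK K_car by blast
qed

lemma sub_W_K: "subring W (T\<lparr>carrier := K\<rparr>)"
proof -
  have "ring (T\<lparr>carrier := W\<rparr>)" using subring_is_ring[OF W_sub] .
  then have "ring ((T\<lparr>carrier := K\<rparr>)\<lparr>carrier := W\<rparr>)" by simp
  then show ?thesis using ring.subring_iff[OF ringK, of W] by auto
qed

lemma inv_pow_cancel: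
  assumes "x \<in> K" "x \<noteq> \<zero>" shows "inv x [^] (n::nat) \<otimes> x [^] n = \<one>"
proof -
  note I = inv_facts[OF assms]
  have "inv x [^] n \<otimes> x [^] n = (inv x \<otimes> x) [^] n"
    using pow_mult_distrib[OF m_comm I(5,6), symmetric] I by simp
  then show ?thesis using I by simp
qed

theorem maxW: "maximal_subring W (T\<lparr>carrier := K\<rparr>)"
  unfolding maximal_subring_def
proof (intro conjI allI impI)
  show "subring W (T\<lparr>carrier := K\<rparr>)" using sub_W_K .
  show "W \<noteq> carrier (T\<lparr>carrier := K\<rparr>)" using KV by auto
  fix S assume a: "subring S (T\<lparr>carrier := K\<rparr>) \<and> W \<subseteq> S \<and> S \<noteq> carrier (T\<lparr>carrier := K\<rparr>)"
  then have S: "subring S T" "S \<subseteq> K" "W \<subseteq> S" "S \<noteq> K" using sub_trans by auto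
  show "S = W"
  proof (rule ccontr)
    assume "S \<noteq> W"
    then obtain s where s: "s \<in> S" "s \<notin> W" using S(3) by blast
    have sK: "s \<in> K" "s \<notin> V" using s S(2) by auto
    have s0: "s \<noteq> \<zero>" using sK subringE(2)[OF V_sub] by auto
    note I = inv_facts[OF sK(1) s0]
    have "K \<subseteq> S"
    proof
      fix y assume y: "y \<in> K"
      then have yc: "y \<in> carrier T" using K_car by auto
      obtain n :: nat where n: "y \<otimes> inv s [^] n \<in> V" using pow[OF sK(1) s0 sK(2) yc] by blast
      have "y \<otimes> inv s [^] n \<in> K"
        using y pow_closed[OF K_sub I(1)] subringE(6)[OF K_sub] by auto
      then have "y \<otimes> inv s [^] n \<in> S" using n S(3) by auto
      moreover have "s [^] n \<in> S" using pow_closed[OF S(1) s(1)] .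
      ultimately have "(y \<otimes> inv s [^] n) \<otimes> s [^] n \<in> S" using subringE(6)[OF S(1)] by auto
      moreover have "(y \<otimes> inv s [^] n) \<otimes> s [^] n = y"
        using inv_pow_cancel[OF sK(1) s0, of n] yc I by (simp add: m_assoc)
      ultimately show "y \<in> S" by simp
    qed
    then show False using S by auto
  qed
qed

lemma one_ne_zero: "\<one> \<noteq> \<zero>"
  using subdomainE(10)[OF subfield.axioms(1)[OF K]] .

lemma K_integral: "a \<in> K \<Longrightarrow> b \<in> K \<Longrightarrow> a \<otimes> b = \<zero> \<Longrightarrow> a = \<zero> \<or> b = \<zero>"
  using subdomainE(9)[OF subfield.axioms(1)[OF K]] by blast

lemma domW: "domain (T\<lparr>carrier := W\<rparr>)"
proof -
  have "subdomain W T"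
    by (rule subdomainI[OF subcringI'[OF W_sub] one_ne_zero]) (use K_integral in blast)
  then show ?thesis using subdomain_iff[OF W_car] by blast
qed

lemma div_total:
  assumes a: "a \<in> W" and b: "b \<in> W"
  shows "(\<exists>c\<in>W. b = a \<otimes> c) \<or> (\<exists>c\<in>W. a = b \<otimes> c)"
proof -
  have ac: "a \<in> carrier T" and bc: "b \<in> carrier T" using a b W_car by auto
  have zW: "\<zero> \<in> W" using subringE(2)[OF W_sub] .
  show ?thesis
  proof (cases "a = \<zero> \<or> b = \<zero>")
    case True
    then show ?thesis
    proof
      assume "a = \<zero>" then have "a = b \<otimes> \<zero>" using bc by simp
      then show ?thesis using zW by blast
    next
      assume "b = \<zero>" then have "b = a \<otimes> \<zero>" using ac by simp
      then show ?thesis using zW by blast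
    qed
  next
    case False
    then have a0: "a \<noteq> \<zero>" and b0: "b \<noteq> \<zero>" by auto
    have aK: "a \<in> K" and bK: "b \<in> K" using a b by auto
    note Ia = inv_facts[OF aK a0] and Ib = inv_facts[OF bK b0]
    let ?c = "inv a \<otimes> b"
    have cK: "?c \<in> K" using Ia(1) a b subringE(6)[OF K_sub] by auto
    show ?thesis
    proof (cases "?c \<in> V")
      case True
      have "a \<otimes> ?c = (a \<otimes> inv a) \<otimes> b" using m_assoc[OF ac Ia(5) bc, symmetric] .
      also have "\<dots> = b" using Ia(3) bc by simp
      finally have "b = a \<otimes> ?c" by simp
      then show ?thesis using True cK by blast
    next
      case False
      have c0: "?c \<noteq> \<zero>" using False subringE(2)[OF V_sub] by auto
      have g: "\<And>x y z w. x \<in> carrier T \<Longrightarrow> y \<in> carrier T \<Longrightarrow> z \<in> carrier T \<Longrightarrow> w \<in> carrier T \<Longrightarrow>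
          (z \<otimes> y) \<otimes> (w \<otimes> x) = (x \<otimes> z) \<otimes> (y \<otimes> w)" by algebra
      have "?c \<otimes> (inv b \<otimes> a) = (a \<otimes> inv a) \<otimes> (b \<otimes> inv b)"
        by (rule g) (use Ia Ib ac bc in auto)
      then have cc: "?c \<otimes> (inv b \<otimes> a) = \<one>"
        using Ia Ib a b by simp
      have "inv ?c = inv b \<otimes> a"
        by (rule comm_inv_char[OF _ _ cc]) (use Ia Ib ac bc in auto)
      then have d: "inv b \<otimes> a \<in> V" using val[OF cK c0 False] by simp
      have dK: "inv b \<otimes> a \<in> K" using Ib(1) a b subringE(6)[OF K_sub] by auto
      have "b \<otimes> (inv b \<otimes> a) = (b \<otimes> inv b) \<otimes> a" using m_assoc[OF bc Ib(5) ac, symmetric] .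
      also have "\<dots> = a" using Ib(3) ac by simp
      finally have "a = b \<otimes> (inv b \<otimes> a)" by simp
      then show ?thesis using d dK by blast
    qed
  qed
qed

theorem valW: "valuation_domain (T\<lparr>carrier := W\<rparr>)"
  unfolding valuation_domain_def using domW div_total by simp

end


context L
begin

abbreviation "R \<equiv> T\<lparr>carrier := W\<rparr>"

lemma ringR: "ring R" using domain.axioms(1)[OF domW] cring.axioms(1) by blast
lemma crR: "cring R" using domain.axioms(1)[OF domW] .

lemma negR: "a \<in> W \<Longrightarrow> \<ominus>\<^bsub>R\<^esub> a = \<ominus> a"
  using abelian_group.minus_equality[OF ring.is_abelian_group[OF ringR], of "\<ominus> a" a]
    subringE(5)[OF W_sub, of a] W_car by (auto simp: l_neg)

definition M :: "'a set" where "M = {w \<in> W. w = \<zero> \<or> inv w \<notin> V}"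

lemma M_W: "M \<subseteq> W" unfolding M_def by auto

lemma Mmul:
  assumes r: "r \<in> W" and a: "a \<in> M" shows "r \<otimes> a \<in> M"
proof -
  have aW: "a \<in> W" using a M_W by auto
  have raW: "r \<otimes> a \<in> W" using subringE(6)[OF W_sub] r aW by auto
  have rc: "r \<in> carrier T" and ac: "a \<in> carrier T" using r aW W_car by auto
  show ?thesis
  proof (cases "r \<otimes> a = \<zero>")
    case True then show ?thesis using raW unfolding M_def by auto
  next
    case False
    then have r0: "r \<noteq> \<zero>" and a0: "a \<noteq> \<zero>" using rc ac by auto
    have ia: "inv a \<notin> V" using a a0 unfolding M_def by auto
    have raK: "r \<otimes> a \<in> K" using raW by auto
    note I = inv_facts[OF raK False]
    have g: "\<And>x y z. x \<in> carrier T \<Longrightarrow> y \<in> carrier T \<Longrightarrow> z \<in> carrier T \<Longrightarrow>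
      x \<otimes> (y \<otimes> z) = (y \<otimes> x) \<otimes> z" by algebra
    have "a \<otimes> (r \<otimes> inv (r \<otimes> a)) = (r \<otimes> a) \<otimes> inv (r \<otimes> a)"
      by (rule g) (use rc ac I(5) in auto)
    also have "\<dots> = \<one>" using I(3) .
    finally have "inv a = r \<otimes> inv (r \<otimes> a)"
      using comm_inv_char[OF ac _ ] rc I(5) by simp
    then have "inv (r \<otimes> a) \<notin> V" using ia r subringE(6)[OF V_sub, of r "inv (r \<otimes> a)"] by auto
    then show ?thesis using raW unfolding M_def by auto
  qed
qed

lemma Madd:
  assumes a: "a \<in> M" and b: "b \<in> M" shows "a \<oplus> b \<in> M"
proof -
  have aW: "a \<in> W" and bW: "b \<in> W" using a b M_W by auto
  have ac: "a \<in> carrier T" and bc: "b \<in> carrier T" using aW bW W_car by auto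
  have oW: "\<one> \<in> W" using subringE(3)[OF W_sub] .
  from div_total[OF aW bW] show ?thesis
  proof
    assume "\<exists>c\<in>W. b = a \<otimes> c"
    then obtain c where c: "c \<in> W" "b = a \<otimes> c" by blast
    have cc: "c \<in> carrier T" using c W_car by auto
    have "a \<oplus> b = (\<one> \<oplus> c) \<otimes> a" using c(2) ac cc by algebra
    moreover have "\<one> \<oplus> c \<in> W" using subringE(7)[OF W_sub] oW c by auto
    ultimately show ?thesis using Mmul a by simp
  next
    assume "\<exists>c\<in>W. a = b \<otimes> c"
    then obtain c where c: "c \<in> W" "a = b \<otimes> c" by blast
    have cc: "c \<in> carrier T" using c W_car by auto
    have "a \<oplus> b = (\<one> \<oplus> c) \<otimes> b" using c(2) bc cc by algebra
    moreover have "\<one> \<oplus> c \<in> W" using subringE(7)[OF W_sub] oW c by auto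
    ultimately show ?thesis using Mmul b by simp
  qed
qed

lemma Mneg: "a \<in> M \<Longrightarrow> \<ominus> a \<in> M"
proof -
  assume a: "a \<in> M"
  have ac: "a \<in> carrier T" using a M_W W_car by auto
  have "\<ominus> a = (\<ominus> \<one>) \<otimes> a" using ac by (simp add: l_minus)
  moreover have "\<ominus> \<one> \<in> W" using subringE(3,5)[OF W_sub] by auto
  ultimately show ?thesis using Mmul a by simp
qed

lemma M_prime: "primeideal M R"
proof (rule primeidealI2)
  show "additive_subgroup M R"
  proof (rule additive_subgroupI)
    have z: "\<zero> \<in> M" using subringE(2)[OF W_sub] unfolding M_def by auto
    show "subgroup M (add_monoid R)"
    proof (rule subgroup.intro)
      show "M \<subseteq> carrier (add_monoid R)" using M_W by simp
      show "\<And>x y. x \<in> M \<Longrightarrow> y \<in> M \<Longrightarrow> x \<otimes>\<^bsub>add_monoid R\<^esub> y \<in> M" using Madd by simp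
      show "\<one>\<^bsub>add_monoid R\<^esub> \<in> M" using z by simp
      fix x assume x: "x \<in> M"
      have "inv\<^bsub>add_monoid R\<^esub> x = \<ominus>\<^bsub>R\<^esub> x" by (simp only: a_inv_def)
      also have "\<dots> = \<ominus> x" using negR x M_W by auto
      finally show "inv\<^bsub>add_monoid R\<^esub> x \<in> M" using Mneg x by simp
    qed
  qed
  show "cring R" using crR .
  show "\<And>a x. a \<in> M \<Longrightarrow> x \<in> carrier R \<Longrightarrow> x \<otimes>\<^bsub>R\<^esub> a \<in> M" using Mmul by simp
  show "a \<otimes>\<^bsub>R\<^esub> x \<in> M" if ax: "a \<in> M" "x \<in> carrier R" for a x
  proof -
    have "a \<in> carrier T" "x \<in> carrier T" using ax M_W W_car by auto
    then have "a \<otimes> x = x \<otimes> a" using m_comm by blast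
    then show ?thesis using Mmul ax by simp
  qed
  have "\<one> \<notin> M" using one_ne_zero subringE(3)[OF V_sub] unfolding M_def by auto
  then show "carrier R \<noteq> M" using subringE(3)[OF W_sub] by auto
  fix a b assume ab: "a \<in> carrier R" "b \<in> carrier R" "a \<otimes>\<^bsub>R\<^esub> b \<in> M"
  show "a \<in> M \<or> b \<in> M"
  proof (rule ccontr)
    assume n: "\<not> (a \<in> M \<or> b \<in> M)"
    have aW: "a \<in> W" "b \<in> W" using ab by auto
    then have a0: "a \<noteq> \<zero>" "b \<noteq> \<zero>" and iv: "inv a \<in> V" "inv b \<in> V" using n unfolding M_def by auto
    have aK: "a \<in> K" "b \<in> K" using aW by auto
    note Ia = inv_facts[OF aK(1) a0(1)] and Ib = inv_facts[OF aK(2) a0(2)]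
    have ab0: "a \<otimes> b \<noteq> \<zero>" using K_integral aK a0 by blast
    have g: "\<And>x y z w. x \<in> carrier T \<Longrightarrow> y \<in> carrier T \<Longrightarrow> z \<in> carrier T \<Longrightarrow> w \<in> carrier T \<Longrightarrow>
          (x \<otimes> y) \<otimes> (z \<otimes> w) = (x \<otimes> z) \<otimes> (y \<otimes> w)" by algebra
    have "(a \<otimes> b) \<otimes> (inv a \<otimes> inv b) = (a \<otimes> inv a) \<otimes> (b \<otimes> inv b)"
      by (rule g) (use Ia Ib in auto)
    then have "(a \<otimes> b) \<otimes> (inv a \<otimes> inv b) = \<one>" using Ia Ib by simp
    then have "inv (a \<otimes> b) = inv a \<otimes> inv b"
      by (rule comm_inv_char[rotated 2]) (use Ia Ib in auto)
    then have "inv (a \<otimes> b) \<in> V" using iv subringE(6)[OF V_sub] by auto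
    then show False using ab(3) ab0 unfolding M_def by auto
  qed
qed

lemma M_nonzero: "\<exists>t \<in> M. t \<noteq> \<zero>"
proof -
  obtain s where s: "s \<in> K" "s \<notin> V" using KV by blast
  have s0: "s \<noteq> \<zero>" using s subringE(2)[OF V_sub] by auto
  note I = inv_facts[OF s(1) s0]
  have tV: "inv s \<in> V" using val[OF s(1) s0 s(2)] .
  have "inv (inv s) = s" by (rule comm_inv_char) (use I in auto)
  then have "inv s \<in> M" using tV I s(2) unfolding M_def by auto
  then show ?thesis using I by blast
qed

end


context L
begin

lemma PI_ideal: "primeideal Q R \<Longrightarrow> ideal Q R" using primeideal.axioms(1) by blast
lemma PI_zero: "primeideal Q R \<Longrightarrow> \<zero> \<in> Q"
  using additive_subgroup.zero_closed[OF ideal.axioms(1)[OF PI_ideal]] by fastforce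
lemma PI_sub: "primeideal Q R \<Longrightarrow> Q \<subseteq> W"
  using additive_subgroup.a_subset[OF ideal.axioms(1)[OF PI_ideal]] by fastforce
lemma PI_one: "primeideal Q R \<Longrightarrow> \<one> \<notin> Q"
  using ideal.one_imp_carrier[OF PI_ideal] primeideal.I_notcarr by fastforce
lemma PI_rc: "primeideal Q R \<Longrightarrow> a \<in> Q \<Longrightarrow> x \<in> W \<Longrightarrow> a \<otimes> x \<in> Q"
  using ideal.I_r_closed[OF PI_ideal, of Q a x] by simp
lemma PI_prime: "primeideal Q R \<Longrightarrow> a \<in> W \<Longrightarrow> b \<in> W \<Longrightarrow> a \<otimes> b \<in> Q \<Longrightarrow> a \<in> Q \<or> b \<in> Q"
  using primeideal.I_prime[of Q R a b] by simp

lemma prime_pow: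
  assumes Q: "primeideal Q R" and m: "m \<in> W" shows "m [^] (n::nat) \<in> Q \<Longrightarrow> m \<in> Q"
proof (induct n)
  case 0 then show ?case using PI_one[OF Q] by simp
next
  case (Suc n)
  have "m [^] n \<otimes> m \<in> Q" using Suc(2) by simp
  then have "m [^] n \<in> Q \<or> m \<in> Q" using PI_prime[OF Q pow_closed[OF W_sub m] m] by blast
  then show ?case using Suc(1) by blast
qed

lemma no_chain:
  assumes P: "primeideal P R" and Q: "primeideal Q R" and U: "primeideal U R"
    and PQ: "P \<subset> Q" and QU: "Q \<subset> U"
  shows False
proof -
  obtain q where q: "q \<in> Q" "q \<notin> P" using PQ by blast
  obtain m where m: "m \<in> U" "m \<notin> Q" using QU by blast
  have q0: "q \<noteq> \<zero>" using q PI_zero[OF P] by auto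
  have m0: "m \<noteq> \<zero>" using m PI_zero[OF Q] by auto
  have qW: "q \<in> W" using q PI_sub[OF Q] by auto
  have mW: "m \<in> W" using m PI_sub[OF U] by auto
  have qK: "q \<in> K" and mK: "m \<in> K" using qW mW by auto
  note Iq = inv_facts[OF qK q0] and Im = inv_facts[OF mK m0]
  have nV: "inv m \<notin> V"
  proof
    assume "inv m \<in> V"
    then have "inv m \<in> W" using Im by auto
    then have "m \<otimes> inv m \<in> U" using PI_rc[OF U m(1)] by blast
    then show False using Im PI_one[OF U] by simp
  qed
  obtain n :: nat where n: "inv q \<otimes> inv (inv m) [^] n \<in> V"
    using pow[OF Im(1) Im(2) nV Iq(5)] by blast
  have "inv (inv m) = m" by (rule comm_inv_char) (use Im in auto)
  then have zV: "inv q \<otimes> m [^] n \<in> V" using n by simp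
  have "inv q \<otimes> m [^] n \<in> K" using Iq(1) pow_closed[OF K_sub mK] subringE(6)[OF K_sub] by blast
  then have zW: "inv q \<otimes> m [^] n \<in> W" using zV by blast
  have mc: "m [^] n \<in> carrier T" using Im by simp
  have "q \<otimes> (inv q \<otimes> m [^] n) = (q \<otimes> inv q) \<otimes> m [^] n"
    using m_assoc[OF Iq(6) Iq(5) mc] by simp
  also have "\<dots> = m [^] n" using Iq(3) mc by simp
  finally have "m [^] n \<in> Q" using PI_rc[OF Q q(1) zW] by simp
  then have "m \<in> Q" using prime_pow[OF Q mW] by blast
  then show False using m by blast
qed

theorem krullW: "krull_dim_one R"
  unfolding krull_dim_one_def
proof (intro conjI)
  have z: "primeideal {\<zero>} R" using domain.zeroprimeideal[OF domW] by simp
  have "{\<zero>} \<subset> M" using M_nonzero M_prime PI_zero by blast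
  then show "\<exists>P Q. primeideal P R \<and> primeideal Q R \<and> P \<subset> Q" using z M_prime by blast
  show "\<not> (\<exists>P Q U. primeideal P R \<and> primeideal Q R \<and> primeideal U R \<and> P \<subset> Q \<and> Q \<subset> U)"
    using no_chain by blast
qed

end

theorem lemma3p2:
  fixes T :: "('a, 'b) ring_scheme" and K V :: "'a set"
  assumes "cring T"
    and "subfield K T"
    and "maximal_subring V T"
    and "integrally_closed_in V T"
    and "\<not> K \<subseteq> V"
  shows "maximal_subring (V \<inter> K) (T\<lparr>carrier := K\<rparr>) \<and>
         valuation_domain (T\<lparr>carrier := V \<inter> K\<rparr>) \<and>
         krull_dim_one (T\<lparr>carrier := V \<inter> K\<rparr>)"
proof -
  have L: "L T K V" unfolding L_def L_axioms_def using assms by auto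
  show ?thesis using L.maxW[OF L] L.valW[OF L] L.krullW[OF L] by blast
qed

end
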